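(* Let $f(x)=\ln(e-x)$ for $0\le x\le e-1$ and $f(x)=0$ for $x>e-1$. For every instance, if $r^\star$ is the stopping rate of $\mathrm{EnvyFree}(f)$ computed from the true costs, then $\sum_{i\in S}u_if_{r^\star}(c_i/u_i)\ge(1-1/e)U^\star$.
   Context: Setting: a buyer with budget $B>0$ faces a finite set $S$ of sellers; seller $i$ owns one divisible item giving utility $u_i>0$ and has cost $c_i\ge0$; buying fraction $x_i\in[0,1]$ costs $x_ic_i$ and gives utility $x_iu_i$. $U^\star=\max\{\sum_iu_i\alpha_i:\alpha\in[0,1]^S,\sum_ic_i\alpha_i\le B\}$. For $r>0$: $f_r(x)=f(x/r)$, $Q_r(x)=xf_r(x)+\int_x^\infty f_r(y)\,dy$, $P_{i,r}(x)=u_iQ_r(x/u_i)$. The stopping rate $r^\star$ of $\mathrm{EnvyFree}(f)$ on cost vector $c$ is the value at which, decreasing $r$ from $\infty$, the nondecreasing continuous function $r\mapsto\sum_iP_{i,r}(c_i)$ first equals $B$; $\mathrm{EnvyFree}(f)$ buys $f_{r^\star}(c_i/u_i)$ of item $i$ and pays $P_{i,r^\star}(c_i)$. *)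

theory Defs
  imports "HOL-Analysis.Analysis"
begin

definition f_ln :: "real \<Rightarrow> real" where
  "f_ln x = (if 0 \<le> x \<and> x \<le> exp 1 - 1 then ln (exp 1 - x) else 0)"

definition f_rate :: "(real \<Rightarrow> real) \<Rightarrow> real \<Rightarrow> real \<Rightarrow> real" where
  "f_rate f r x = f (x / r)"

definition Q_rate :: "(real \<Rightarrow> real) \<Rightarrow> real \<Rightarrow> real \<Rightarrow> real" where
  "Q_rate f r x = x * f_rate f r x + integral {x..} (\<lambda>y. f_rate f r y)"

definition P_rate :: "(real \<Rightarrow> real) \<Rightarrow> real \<Rightarrow> real \<Rightarrow> real \<Rightarrow> real" where
  "P_rate f ui r x = ui * Q_rate f r (x / ui)"

definition total_payment :: "(real \<Rightarrow> real) \<Rightarrow> 'a set \<Rightarrow> ('a \<Rightarrow> real) \<Rightarrow> ('a \<Rightarrow> real) \<Rightarrow> real \<Rightarrow> real" where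
  "total_payment f S u c r = (\<Sum>i\<in>S. P_rate f (u i) r (c i))"

text \<open>Stopping rate: decreasing r from infinity, the first value where the total payment equals B,
  i.e. the largest r > 0 with total payment equal to B.\<close>
definition is_stopping_rate :: "(real \<Rightarrow> real) \<Rightarrow> 'a set \<Rightarrow> ('a \<Rightarrow> real) \<Rightarrow> ('a \<Rightarrow> real) \<Rightarrow> real \<Rightarrow> real \<Rightarrow> bool" where
  "is_stopping_rate f S u c B r \<longleftrightarrow>
     r > 0 \<and> total_payment f S u c r = B \<and> (\<forall>r'>r. total_payment f S u c r' \<noteq> B)"

definition U_opt :: "'a set \<Rightarrow> ('a \<Rightarrow> real) \<Rightarrow> ('a \<Rightarrow> real) \<Rightarrow> real \<Rightarrow> real" where
  "U_opt S u c B = Sup {(\<Sum>i\<in>S. u i * \<alpha> i) | \<alpha>.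
      (\<forall>i\<in>S. 0 \<le> \<alpha> i \<and> \<alpha> i \<le> 1) \<and> (\<Sum>i\<in>S. c i * \<alpha> i) \<le> B}"

end

theory Submission imports Defs begin

lemma derF:
  fixes r y :: real and X assumes r: "r>0" and pos: "exp 1 - y / r > 0"
  shows "((\<lambda>y::real. - (r * exp 1 - y) * ln (exp 1 - y / r) + (r * exp 1 - y)) has_real_derivative ln (exp 1 - y / r)) (at y within X)"
proof -
  have eq: "r * exp 1 - y = r * (exp 1 - y / r)" using r by (simp add: field_simps)
  have d1: "((\<lambda>z. exp 1 - z / r) has_real_derivative (- (1/r))) (at y within X)"
    using DERIV_diff[OF DERIV_const DERIV_cdivide[OF DERIV_ident, of r]] by simp
  have d2: "((\<lambda>z. ln (exp 1 - z / r)) has_real_derivative (1/(exp 1 - y/r)) * (-(1/r))) (at y within X)"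
    by (rule DERIV_chain2[OF DERIV_ln_divide[OF pos] d1])
  have d3: "((\<lambda>z. - (r*exp 1 - z)) has_real_derivative 1) (at y within X)"
    using DERIV_diff[OF DERIV_ident DERIV_const[of "r * exp 1"], of y X] by simp
  have d4: "((\<lambda>z. r*exp 1 - z) has_real_derivative -1) (at y within X)"
    using DERIV_diff[OF DERIV_const[of "r * exp 1"] DERIV_ident, of y X] by simp
  show ?thesis
    apply (rule DERIV_cong[OF DERIV_add[OF DERIV_mult[OF d3 d2] d4]])
    using r pos by (subst eq) (simp add: field_simps)
qed

lemma int_formula:
  fixes r x :: real
  assumes r: "r > 0" and x: "x \<ge> 0" and a: "x / r \<le> exp 1 - 1"
  shows "integral {x..} (\<lambda>y. f_rate f_ln r y) = r + (r * exp 1 - x) * ln (exp 1 - x / r) - (r * exp 1 - x)"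
proof -
  define M where "M = r * (exp 1 - 1)"
  have xM: "x \<le> M" using a r by (simp add: M_def field_simps)
  define F where "F = (\<lambda>y::real. - (r * exp 1 - y) * ln (exp 1 - y / r) + (r * exp 1 - y))"
  have der: "(F has_real_derivative ln (exp 1 - y / r)) (at y within {x..M})" if "y \<in> {x..M}" for y
  proof -
    have "y / r \<le> exp 1 - 1" using that r by (simp add: M_def field_simps)
    hence pos: "exp 1 - y / r > 0" by simp
    show ?thesis unfolding F_def by (rule derF[OF r pos])
  qed
  have "((\<lambda>y. ln (exp 1 - y / r)) has_integral (F M - F x)) {x..M}"
    by (rule fundamental_theorem_of_calculus[OF xM]) (use der in \<open>simp add: has_real_derivative_iff_has_vector_derivative\<close>)
  moreover have "ln (exp 1 - y / r) = f_rate f_ln r y" if "y \<in> {x..M}" for y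
  proof -
    from that have "0 \<le> y / r" "y / r \<le> exp 1 - 1" using r x by (auto simp: M_def field_simps)
    thus ?thesis by (simp add: f_rate_def f_ln_def)
  qed
  ultimately have "((\<lambda>y. f_rate f_ln r y) has_integral (F M - F x)) {x..M}"
    using has_integral_cong[of "{x..M}" "\<lambda>y. ln (exp 1 - y / r)" "\<lambda>y. f_rate f_ln r y"] by blast
  hence "((\<lambda>y. if y \<in> {x..M} then f_rate f_ln r y else 0) has_integral (F M - F x)) {x..}"
    by (subst has_integral_restrict) auto
  moreover have "(if y \<in> {x..M} then f_rate f_ln r y else 0) = f_rate f_ln r y" if "y \<in> {x..}" for y
  proof -
    have "y > M \<Longrightarrow> f_rate f_ln r y = 0" using r by (auto simp: f_rate_def f_ln_def M_def field_simps)
    thus ?thesis using that by auto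
  qed
  ultimately have "((\<lambda>y. f_rate f_ln r y) has_integral (F M - F x)) {x..}"
    using has_integral_cong[of "{x..}" "\<lambda>y. if y \<in> {x..M} then f_rate f_ln r y else 0" "\<lambda>y. f_rate f_ln r y"] by blast
  hence "integral {x..} (\<lambda>y. f_rate f_ln r y) = F M - F x" by (rule integral_unique)
  also have "F M = r" using r by (simp add: F_def M_def field_simps)
  finally show ?thesis by (simp add: F_def algebra_simps)
qed

lemma int_zero:
  fixes r x :: real
  assumes r: "r > 0" and a: "x / r > exp 1 - 1"
  shows "integral {x..} (\<lambda>y. f_rate f_ln r y) = 0"
proof -
  have "\<forall>y\<in>{x..}. f_rate f_ln r y = 0"
  proof
    fix y assume "y \<in> {x..}"
    hence "y / r \<ge> x / r" using r by (simp add: divide_right_mono)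
    thus "f_rate f_ln r y = 0" using a by (simp add: f_rate_def f_ln_def)
  qed
  hence "integral {x..} (\<lambda>y. f_rate f_ln r y) = integral {x..} (\<lambda>y. 0::real)"
    by (intro integral_cong) auto
  thus ?thesis by simp
qed

lemma Q_formula:
  fixes r x :: real
  assumes r: "r > 0" and x: "x \<ge> 0"
  shows "Q_rate f_ln r x = (if x / r \<le> exp 1 - 1 then r * (exp 1 * ln (exp 1 - x / r) + 1 - exp 1 + x / r) else 0)"
proof (cases "x / r \<le> exp 1 - 1")
  case True
  have "x / r \<ge> 0" using r x by simp
  with True have fv: "f_rate f_ln r x = ln (exp 1 - x / r)" by (simp add: f_rate_def f_ln_def)
  have "r * exp 1 - x = r * (exp 1 - x / r)" "x = r * (x / r)" using r by (simp_all add: field_simps)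
  then show ?thesis using True unfolding Q_rate_def fv int_formula[OF r x True]
    by (simp add: algebra_simps)
next
  case False
  have "integral {x..} (\<lambda>y. f_rate f_ln r y) = 0" using int_zero[OF r] False by (simp only: not_le)
  then show ?thesis unfolding Q_rate_def using False by (simp add: f_rate_def[of f_ln r x] f_ln_def)
qed

lemma item:
  fixes u c r al :: real
  assumes u: "u > 0" and c: "c \<ge> 0" and r: "r > 0" and al: "0 \<le> al" "al \<le> 1"
  shows "u * f_rate f_ln r (c / u) \<ge> (1 - 1 / exp 1) * (u * al) + (P_rate f_ln u r c - c * al) / (exp 1 * r)"
proof -
  define a where "a = c / u / r"
  have a0: "a \<ge> 0" using u c r by (simp add: a_def)
  have ca: "c = u * r * a" using u r by (simp add: a_def field_simps)
  have cal: "c * al = u * r * a * al" using ca by simp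
  have fv: "f_rate f_ln r (c / u) = f_ln a" by (simp add: f_rate_def a_def)
  have P: "P_rate f_ln u r c = u * (if a \<le> exp 1 - 1 then r * (exp 1 * ln (exp 1 - a) + 1 - exp 1 + a) else 0)"
    unfolding P_rate_def using Q_formula[OF r, of "c/u"] u c by (simp add: a_def)
  have e: "exp (1::real) > 0" by simp
  show ?thesis
  proof (cases "a \<le> exp 1 - 1")
    case True
    have "(1 - 1 / exp 1) * (u * al) + (P_rate f_ln u r c - c * al) / (exp 1 * r)
       = u * (ln (exp 1 - a) + (1 - exp 1 + a) * (1 - al) / exp 1)"
      using True r e unfolding P by (simp add: ca field_simps)
    also have "\<dots> \<le> u * ln (exp 1 - a)"
    proof -
      have "(1 - exp 1 + a) * (1 - al) \<le> 0" using True al by (intro mult_nonpos_nonneg) auto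
      hence "(1 - exp 1 + a) * (1 - al) / exp 1 \<le> 0" using e by (simp add: divide_nonpos_pos)
      thus ?thesis using u by (simp add: mult_left_mono)
    qed
    finally show ?thesis using True a0 by (simp add: fv f_ln_def)
  next
    case False
    have "(1 - 1 / exp 1) * (u * al) + (P_rate f_ln u r c - c * al) / (exp 1 * r)
       = u * (al * (exp 1 - 1 - a) / exp 1)"
      using False r e unfolding P by (simp add: ca field_simps)
    also have "\<dots> \<le> 0"
    proof -
      have "al * (exp 1 - 1 - a) \<le> 0" using False al by (intro mult_nonneg_nonpos) auto
      hence "al * (exp 1 - 1 - a) / exp 1 \<le> 0" using e by (simp add: divide_nonpos_pos)
      hence "u * (al * (exp 1 - 1 - a) / exp 1) \<le> 0" using u by (intro mult_nonneg_nonpos) auto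
      thus ?thesis by simp
    qed
    finally show ?thesis using False by (simp add: fv f_ln_def)
  qed
qed

theorem lemma4:
  fixes S :: "'a set" and u c :: "'a \<Rightarrow> real" and B r :: real
  assumes "finite S"
    and "B > 0"
    and "\<forall>i\<in>S. u i > 0"
    and "\<forall>i\<in>S. c i \<ge> 0"
    and "is_stopping_rate f_ln S u c B r"
  shows "(\<Sum>i\<in>S. u i * f_rate f_ln r (c i / u i)) \<ge> (1 - 1 / exp 1) * U_opt S u c B"
proof -
  from assms(5) have r: "r > 0" and tot: "(\<Sum>i\<in>S. P_rate f_ln (u i) r (c i)) = B"
    by (auto simp: is_stopping_rate_def total_payment_def)
  let ?L = "\<Sum>i\<in>S. u i * f_rate f_ln r (c i / u i)"
  let ?A = "{(\<Sum>i\<in>S. u i * \<alpha> i) | \<alpha>. (\<forall>i\<in>S. 0 \<le> \<alpha> i \<and> \<alpha> i \<le> 1) \<and> (\<Sum>i\<in>S. c i * \<alpha> i) \<le> B}"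
  have ne: "?A \<noteq> {}"
  proof -
    have "(\<Sum>i\<in>S. u i * (\<lambda>_. 0::real) i) \<in> ?A" using assms(2) by fastforce
    thus ?thesis by blast
  qed
  have bd: "(1 - 1 / exp 1) * v \<le> ?L" if "v \<in> ?A" for v
  proof -
    obtain al where al: "\<forall>i\<in>S. 0 \<le> al i \<and> al i \<le> 1" "(\<Sum>i\<in>S. c i * al i) \<le> B"
      and v: "v = (\<Sum>i\<in>S. u i * al i)" using \<open>v \<in> ?A\<close> by blast
    have "(\<Sum>i\<in>S. (1 - 1 / exp 1) * (u i * al i) + (P_rate f_ln (u i) r (c i) - c i * al i) / (exp 1 * r)) \<le> ?L"
      by (rule sum_mono, rule item) (use assms(3,4) r al in auto)
    moreover have "(\<Sum>i\<in>S. (1 - 1 / exp 1) * (u i * al i) + (P_rate f_ln (u i) r (c i) - c i * al i) / (exp 1 * r))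
      = (1 - 1 / exp 1) * v + (B - (\<Sum>i\<in>S. c i * al i)) / (exp 1 * r)"
      by (simp add: sum.distrib sum_distrib_left sum_divide_distrib[symmetric] sum_subtractf tot v)
    moreover have "(B - (\<Sum>i\<in>S. c i * al i)) / (exp 1 * r) \<ge> 0" using al(2) r by simp
    ultimately show ?thesis by linarith
  qed
  have kp: "1 - 1 / exp 1 > (0::real)"
  proof -
    have "exp (1::real) > 1" by simp
    thus ?thesis by (simp add: field_simps)
  qed
  have "U_opt S u c B \<le> ?L / (1 - 1 / exp 1)"
    unfolding U_opt_def
  proof (rule cSup_least[OF ne])
    fix v assume "v \<in> ?A"
    from bd[OF this] kp show "v \<le> ?L / (1 - 1 / exp 1)" by (simp add: pos_le_divide_eq mult.commute)
  qed
  hence "(1 - 1 / exp 1) * U_opt S u c B \<le> (1 - 1 / exp 1) * (?L / (1 - 1 / exp 1))"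
    using kp by (intro mult_left_mono) auto
  thus ?thesis using kp by simp
qed

end
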